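(* Let $G$ be a topological group with identity $e$. The following statements are equivalent: (1) $G$ is an Alexandroff space; (2) $V(e)$ is open; (3) there exist a topological group $E$ carrying the indiscrete topology and a topological group $F$ carrying the discrete topology such that $E\times F$ and $G$ are homeomorphic topological spaces; (4) there exist a topological space $E$ with the indiscrete topology and a discrete topological space $F$ such that $E\times F$ and $G$ are homeomorphic topological spaces.
   Context: For a topological space $X$ and $a\in X$, $V(a):=\bigcap\{U: U\text{ open}, a\in U\}$; $X$ is an Alexandroff space if $V(a)$ is open for every $a\in X$. The indiscrete topology on a set is the topology whose only open sets are the empty set and the whole set. *)

theory Defs
  imports "HOL-Analysis.Analysis" "HOL-Algebra.Group"
begin

definition topological_group :: "('a, 'b) monoid_scheme \<Rightarrow> 'a topology \<Rightarrow> bool" where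
  "topological_group G T \<longleftrightarrow>
     group G \<and> topspace T = carrier G \<and>
     continuous_map (prod_topology T T) T (\<lambda>(x, y). x \<otimes>\<^bsub>G\<^esub> y) \<and>
     continuous_map T T (\<lambda>x. inv\<^bsub>G\<^esub> x)"

definition nbhd_kernel :: "'a topology \<Rightarrow> 'a \<Rightarrow> 'a set" where
  "nbhd_kernel T a = \<Inter>{U. openin T U \<and> a \<in> U}"

definition alexandroff_space :: "'a topology \<Rightarrow> bool" where
  "alexandroff_space T \<longleftrightarrow> (\<forall>a \<in> topspace T. openin T (nbhd_kernel T a))"

definition indiscrete_space :: "'a topology \<Rightarrow> bool" where
  "indiscrete_space T \<longleftrightarrow> (\<forall>U. openin T U \<longleftrightarrow> U = {} \<or> U = topspace T)"

definition discrete_space :: "'a topology \<Rightarrow> bool" where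
  "discrete_space T \<longleftrightarrow> T = discrete_topology (topspace T)"

end

theory Submission
  imports Defs "HOL-Algebra.Coset"
begin


lemma alex_charI:
  assumes "\<And>a. a \<in> topspace T \<Longrightarrow> \<exists>U. openin T U \<and> a \<in> U \<and> (\<forall>W. openin T W \<and> a \<in> W \<longrightarrow> U \<subseteq> W)"
  shows "alexandroff_space T"
  unfolding alexandroff_space_def
proof
  fix a assume a: "a \<in> topspace T"
  then obtain U where U: "openin T U" "a \<in> U" "\<forall>W. openin T W \<and> a \<in> W \<longrightarrow> U \<subseteq> W"
    using assms by blast
  have "nbhd_kernel T a = U"
    unfolding nbhd_kernel_def using U by blast
  then show "openin T (nbhd_kernel T a)" using U by simp
qed

lemma lemA:
  assumes ie: "indiscrete_space TE" and df: "discrete_space TF"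
    and h: "prod_topology TE TF homeomorphic_space T"
  shows "alexandroff_space T"
proof (rule alex_charI)
  fix a assume a: "a \<in> topspace T"
  from h obtain f g where fg: "homeomorphic_maps (prod_topology TE TF) T f g"
    unfolding homeomorphic_space_def by blast
  have hf: "homeomorphic_map (prod_topology TE TF) T f"
    using fg unfolding homeomorphic_map_maps by blast
  have gc: "continuous_map T (prod_topology TE TF) g"
    using fg unfolding homeomorphic_maps_def by simp
  have gb: "g a \<in> topspace (prod_topology TE TF)"
    using gc a unfolding continuous_map_def by blast
  have fga: "f (g a) = a" using fg a unfolding homeomorphic_maps_def by blast
  obtain x y where xy: "g a = (x, y)" by (meson surj_pair)
  have xE: "x \<in> topspace TE" and yF: "y \<in> topspace TF" using gb xy by auto
  define B where "B = topspace TE \<times> {y}"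
  have D: "TF = discrete_topology (topspace TF)" using df unfolding discrete_space_def .
  have oy: "openin TF {y}" by (subst D) (simp add: yF)
  have oB: "openin (prod_topology TE TF) B"
    unfolding B_def openin_prod_Times_iff using oy by simp
  have Bmin: "B \<subseteq> W" if "openin (prod_topology TE TF) W" "(x,y) \<in> W" for W
  proof -
    have ex: "\<exists>U V. openin TE U \<and> openin TF V \<and> x \<in> U \<and> y \<in> V \<and> U \<times> V \<subseteq> W"
      using openin_prod_topology_alt[THEN iffD1, OF that(1), rule_format, OF that(2)] .
    then obtain U V where UV: "openin TE U" "openin TF V" "x \<in> U" "y \<in> V" "U \<times> V \<subseteq> W"
      by (elim exE conjE)
    have "U = {} \<or> U = topspace TE" using ie UV(1) unfolding indiscrete_space_def by simp
    with UV(3) have U: "U = topspace TE" by blast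
    show ?thesis unfolding B_def using UV(4,5) U by blast
  qed
  show "\<exists>U. openin T U \<and> a \<in> U \<and> (\<forall>W. openin T W \<and> a \<in> W \<longrightarrow> U \<subseteq> W)"
  proof (rule exI[of _ "f ` B"], intro conjI allI impI)
    show "openin T (f ` B)" using homeomorphic_map_openness_eq[OF hf, of B] oB by simp
    show "a \<in> f ` B" using fga xy xE unfolding B_def by force
    fix W assume W: "openin T W \<and> a \<in> W"
    have o1: "openin (prod_topology TE TF) {p \<in> topspace (prod_topology TE TF). f p \<in> W}"
      using openin_continuous_map_preimage[OF homeomorphic_imp_continuous_map[OF hf]] W by simp
    have i1: "(x,y) \<in> {p \<in> topspace (prod_topology TE TF). f p \<in> W}"
      using gb fga W unfolding xy by simp
    have "B \<subseteq> {p \<in> topspace (prod_topology TE TF). f p \<in> W}" by (rule Bmin[OF o1 i1])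
    then show "f ` B \<subseteq> W" by blast
  qed
qed


lemma indiscrete_cont:
  assumes "indiscrete_space Y" "f \<in> topspace X \<rightarrow> topspace Y"
  shows "continuous_map X Y f"
  unfolding continuous_map_def
proof (intro conjI allI impI)
  show "f \<in> topspace X \<rightarrow> topspace Y" by fact
  fix U assume "openin Y U"
  then have "U = {} \<or> U = topspace Y" using assms(1) unfolding indiscrete_space_def by blast
  moreover have "{x \<in> topspace X. f x \<in> topspace Y} = topspace X" using assms(2) by auto
  ultimately show "openin X {x \<in> topspace X. f x \<in> U}" by auto
qed

lemma lemB:
  fixes G :: "('a, 'b) monoid_scheme" (structure) and T :: "'a topology"
  assumes tg: "topological_group G T" and oN: "openin T (nbhd_kernel T \<one>\<^bsub>G\<^esub>)"
  shows "\<exists>(E :: 'a monoid) TE (F :: 'a set monoid) TF.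
           topological_group E TE \<and> indiscrete_space TE \<and>
           topological_group F TF \<and> discrete_space TF \<and>
           prod_topology TE TF homeomorphic_space T"
proof -
  interpret group G using tg unfolding topological_group_def by simp
  define N where "N = nbhd_kernel T \<one>"
  have ts: "topspace T = carrier G" using tg unfolding topological_group_def by simp
  have mc: "continuous_map (prod_topology T T) T (\<lambda>(x, y). x \<otimes> y)"
    and ic: "continuous_map T T (\<lambda>x. inv x)" using tg unfolding topological_group_def by simp_all
  have rt: "continuous_map T T (\<lambda>x. x \<otimes> c)" if "c \<in> carrier G" for c
  proof -
    have "continuous_map T (prod_topology T T) (\<lambda>x. (id x, c))"
      by (rule continuous_map_pairedI) (simp_all add: ts that)
    from continuous_map_compose[OF this mc] show ?thesis by (simp add: o_def id_def)
  qed
  have lt: "continuous_map T T (\<lambda>x. c \<otimes> x)" if "c \<in> carrier G" for c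
  proof -
    have "continuous_map T (prod_topology T T) (\<lambda>x. (c, id x))"
      by (rule continuous_map_pairedI) (simp_all add: ts that)
    from continuous_map_compose[OF this mc] show ?thesis by (simp add: o_def id_def)
  qed
  have Nmin: "N \<subseteq> U" if "openin T U" "\<one> \<in> U" for U
    unfolding N_def nbhd_kernel_def using that by blast
  have NI: "x \<in> N" if "\<And>U. openin T U \<Longrightarrow> \<one> \<in> U \<Longrightarrow> x \<in> U" for x
    unfolding N_def nbhd_kernel_def using that by blast
  have NG: "N \<subseteq> carrier G" by (metis Nmin one_closed openin_topspace ts)
  have oneN: "\<one> \<in> N" by (rule NI) 
  have F3: "n \<otimes> u \<in> U" if "openin T U" "u \<in> U" "n \<in> N" for U u n
  proof -
    have u: "u \<in> carrier G" using that openin_subset ts by blast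
    have "openin T {x \<in> topspace T. x \<otimes> u \<in> U}"
      using openin_continuous_map_preimage[OF rt[OF u] that(1)] .
    moreover have "\<one> \<in> {x \<in> topspace T. x \<otimes> u \<in> U}" using u that ts by simp
    ultimately show ?thesis using Nmin that(3) by blast
  qed
  have subN: "subgroup N G"
  proof (rule subgroupI)
    show "N \<subseteq> carrier G" by (rule NG)
    show "N \<noteq> {}" using oneN by blast
    fix a b assume a: "a \<in> N" and b: "b \<in> N"
    show "a \<otimes> b \<in> N"
    proof (rule NI)
      fix U assume "openin T U" "\<one> \<in> U"
      then show "a \<otimes> b \<in> U" using F3 Nmin a b by blast
    qed
  next
    fix a assume a: "a \<in> N"
    show "inv a \<in> N"
    proof (rule NI)
      fix U assume U: "openin T U" "\<one> \<in> U"
      have "openin T {x \<in> topspace T. inv x \<in> U}"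
        using openin_continuous_map_preimage[OF ic U(1)] .
      moreover have "\<one> \<in> {x \<in> topspace T. inv x \<in> U}" using U ts by simp
      ultimately show "inv a \<in> U" using Nmin a by blast
    qed
  qed
  have normN: "N \<lhd> G"
  proof -
    have "x \<otimes> h \<otimes> inv x \<in> N" if x: "x \<in> carrier G" and h: "h \<in> N" for x h
    proof (rule NI)
      fix U assume U: "openin T U" "\<one> \<in> U"
      have cc: "continuous_map T T ((\<lambda>z. z \<otimes> inv x) \<circ> (\<lambda>y. x \<otimes> y))"
        using continuous_map_compose[OF lt[OF x] rt[OF inv_closed[OF x]]] .
      have "openin T {y \<in> topspace T. x \<otimes> y \<otimes> inv x \<in> U}"
        using openin_continuous_map_preimage[OF cc U(1)] by (simp add: o_def)
      moreover have "\<one> \<in> {y \<in> topspace T. x \<otimes> y \<otimes> inv x \<in> U}" using U ts x by simp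
      ultimately show "x \<otimes> h \<otimes> inv x \<in> U" using Nmin h by blast
    qed
    then show ?thesis using normal_inv_iff subN by blast
  qed

  define E where "E = \<lparr>carrier = N, monoid.mult = (\<lambda>x y. x \<otimes> y), one = \<one>\<rparr>"
  define TE where "TE = subtopology T N"
  define F where "F = G Mod N"
  define TF where "TF = discrete_topology (rcosets N)"
  have tsE: "topspace TE = N" unfolding TE_def using NG ts by auto
  have indE: "indiscrete_space TE"
    unfolding indiscrete_space_def tsE
  proof (intro allI iffI)
    fix U assume "openin TE U"
    then obtain V where V: "openin T V" "U = V \<inter> N" unfolding TE_def openin_subtopology by blast
    show "U = {} \<or> U = N"
    proof (cases "U = {}")
      case False
      then obtain n where n: "n \<in> V" "n \<in> N" using V by blast
      have "m \<in> V" if m: "m \<in> N" for m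
      proof -
        have "m \<otimes> inv n \<in> N" using subN m n by (simp add: subgroup.m_closed subgroup.m_inv_closed)
        then have "(m \<otimes> inv n) \<otimes> n \<in> V" using F3 V n by blast
        moreover have "(m \<otimes> inv n) \<otimes> n = m" using m n NG by (simp add: m_assoc subsetD)
        ultimately show ?thesis by simp
      qed
      then show ?thesis using V by blast
    qed simp
  next
    fix U assume "U = {} \<or> U = N"
    then show "openin TE U" using tsE by (metis openin_empty openin_topspace)
  qed
  have cE[simp]: "carrier E = N" "one E = \<one>" "x \<otimes>\<^bsub>E\<^esub> y = x \<otimes> y" for x y
    unfolding E_def by simp_all
  have grE: "group E"
  proof (rule groupI)
    fix x y z assume "x \<in> carrier E" "y \<in> carrier E" "z \<in> carrier E"
    then show "x \<otimes>\<^bsub>E\<^esub> y \<otimes>\<^bsub>E\<^esub> z = x \<otimes>\<^bsub>E\<^esub> (y \<otimes>\<^bsub>E\<^esub> z)"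
      using NG by (simp add: m_assoc subsetD)
  next
    fix x y assume "x \<in> carrier E" "y \<in> carrier E"
    then show "x \<otimes>\<^bsub>E\<^esub> y \<in> carrier E" using subN by (simp add: subgroup.m_closed)
  next
    show "\<one>\<^bsub>E\<^esub> \<in> carrier E" using oneN by simp
  next
    fix x assume "x \<in> carrier E"
    then show "\<one>\<^bsub>E\<^esub> \<otimes>\<^bsub>E\<^esub> x = x" using NG by (auto)
  next
    fix x assume x: "x \<in> carrier E"
    show "\<exists>y\<in>carrier E. y \<otimes>\<^bsub>E\<^esub> x = \<one>\<^bsub>E\<^esub>"
      using x subN NG by (intro bexI[of _ "inv x"]) (auto simp: subgroup.m_inv_closed)
  qed
  have tgE: "topological_group E TE"
    unfolding topological_group_def
  proof (intro conjI)
    show "group E" by (rule grE)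
    show "topspace TE = carrier E" using tsE by simp
    show "continuous_map (prod_topology TE TE) TE (\<lambda>(x, y). x \<otimes>\<^bsub>E\<^esub> y)"
      using indE monoid.m_closed[OF group.is_monoid[OF grE]] tsE
      by (intro indiscrete_cont) (auto simp: Pi_iff)
    show "continuous_map TE TE (\<lambda>x. inv\<^bsub>E\<^esub> x)"
      using indE group.inv_closed[OF grE] tsE
      by (intro indiscrete_cont) (auto simp: Pi_iff)
  qed
  have grF: "group F" unfolding F_def using normN normal.factorgroup_is_group by blast
  have cF: "carrier F = rcosets N" unfolding F_def FactGroup_def by simp
  have tsF: "topspace TF = rcosets N" unfolding TF_def by simp
  have tgF: "topological_group F TF"
    unfolding topological_group_def
  proof (intro conjI)
    show "group F" by (rule grF)
    show "topspace TF = carrier F" using tsF cF by simp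
    show "continuous_map (prod_topology TF TF) TF (\<lambda>(x, y). x \<otimes>\<^bsub>F\<^esub> y)"
      unfolding TF_def prod_topology_discrete_topology[symmetric]
      using monoid.m_closed[OF group.is_monoid[OF grF]] cF by (auto simp: Pi_iff)
    show "continuous_map TF TF (\<lambda>x. inv\<^bsub>F\<^esub> x)"
      unfolding TF_def using group.inv_closed[OF grF] cF by (auto simp: Pi_iff)
  qed
  have dF: "discrete_space TF" unfolding discrete_space_def tsF TF_def by simp
  define r where "r C = (SOME g. g \<in> C)" for C :: "'a set"
  have rC: "r C \<in> C" "r C \<in> carrier G" "C = N #> r C" if C: "C \<in> rcosets N" for C
  proof -
    obtain a where a: "a \<in> carrier G" "C = N #> a" using C unfolding RCOSETS_def by blast
    have "a \<in> C" using a rcos_self subN by blast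
    then show rc: "r C \<in> C" unfolding r_def by (metis someI)
    then show "r C \<in> carrier G" using subgroup.elemrcos_carrier[OF subN is_group a(1)] a(2) by simp
    show "C = N #> r C" using repr_independence[OF _ a(1) subN, of "r C"] rc a(2) by simp
  qed
  define f where "f p = fst p \<otimes> r (snd p)" for p
  define h where "h g = (g \<otimes> inv (r (N #> g)), N #> g)" for g
  have NgC: "N #> g \<in> rcosets N" if "g \<in> carrier G" for g using rcosetsI NG that by blast
  have hN: "g \<otimes> inv (r (N #> g)) \<in> N" if g: "g \<in> carrier G" for g
  proof -
    have "g \<in> N #> g" using g rcos_self subN by blast
    then have "g \<in> N #> r (N #> g)" using rC(3)[OF NgC[OF g]] by simp
    then show ?thesis using subgroup.rcos_module_imp[OF subN is_group rC(2)[OF NgC[OF g]]] by blast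
  qed
  have oNg: "openin T (N #> g)" if g: "g \<in> carrier G" for g
  proof -
    have "openin T {x \<in> topspace T. x \<otimes> inv g \<in> N}"
      using openin_continuous_map_preimage[OF rt[OF inv_closed[OF g]]] oN N_def by simp
    moreover have "{x \<in> topspace T. x \<otimes> inv g \<in> N} = N #> g"
    proof (rule Set.set_eqI)
      fix x show "x \<in> {x \<in> topspace T. x \<otimes> inv g \<in> N} \<longleftrightarrow> x \<in> N #> g"
        using subgroup.rcos_module[OF subN is_group g, of x] subgroup.elemrcos_carrier[OF subN is_group g, of x] ts
        by auto
    qed
    ultimately show ?thesis by simp
  qed
  have contf: "continuous_map (prod_topology TE TF) T f"
  proof -
    have c1: "continuous_map (prod_topology TE TF) T fst"
      using continuous_map_compose[OF continuous_map_fst[of TE TF], of T id]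
      unfolding TE_def by (simp add: continuous_map_from_subtopology)
    have c2: "continuous_map (prod_topology TE TF) T (\<lambda>p. r (snd p))"
    proof -
      have "continuous_map TF T r" unfolding TF_def using rC(2) ts by (auto simp: Pi_iff)
      from continuous_map_compose[OF continuous_map_snd this] show ?thesis by (simp add: o_def)
    qed
    have "continuous_map (prod_topology TE TF) (prod_topology T T) (\<lambda>p. (fst p, r (snd p)))"
      using c1 c2 by (rule continuous_map_pairedI)
    from continuous_map_compose[OF this mc] show ?thesis by (simp add: f_def[abs_def] o_def)
  qed
  have conth: "continuous_map T (prod_topology TE TF) h"
  proof -
    have c1: "continuous_map T TE (\<lambda>g. g \<otimes> inv (r (N #> g)))"
      using indE hN tsE ts by (intro indiscrete_cont) (auto simp: Pi_iff)
    have c2: "continuous_map T TF (\<lambda>g. N #> g)"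
      unfolding continuous_map_def
    proof (intro conjI allI impI)
      show "(\<lambda>g. N #> g) \<in> topspace T \<rightarrow> topspace TF" using NgC ts tsF by auto
      fix U assume "openin TF U"
      show "openin T {x \<in> topspace T. N #> x \<in> U}"
      proof (subst openin_subopen, intro ballI)
        fix x assume x: "x \<in> {x \<in> topspace T. N #> x \<in> U}"
        then have xG: "x \<in> carrier G" using ts by auto
        have "N #> x \<subseteq> {x \<in> topspace T. N #> x \<in> U}"
        proof
          fix y assume y: "y \<in> N #> x"
          then have "y \<in> carrier G" using subgroup.elemrcos_carrier[OF subN is_group xG] by blast
          moreover have "N #> y = N #> x" using repr_independence[OF y xG subN] by simp
          ultimately show "y \<in> {x \<in> topspace T. N #> x \<in> U}" using x ts by simp
        qed
        then show "\<exists>T'. openin T T' \<and> x \<in> T' \<and> T' \<subseteq> {x \<in> topspace T. N #> x \<in> U}"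
          using oNg[OF xG] rcos_self[OF xG subN] by blast
      qed
    qed
    show ?thesis unfolding h_def[abs_def] using c1 c2 by (rule continuous_map_pairedI)
  qed
  have tsP: "topspace (prod_topology TE TF) = N \<times> rcosets N" using tsE tsF by simp
  have hf: "h (f p) = p" if p: "p \<in> N \<times> rcosets N" for p
  proof -
    obtain n C where nC: "p = (n, C)" "n \<in> N" "C \<in> rcosets N" using p by blast
    have nG: "n \<in> carrier G" using nC NG by blast
    have "n \<otimes> r C \<in> N #> r C" using rcosI[OF nC(2) NG rC(2)[OF nC(3)]] .
    then have "n \<otimes> r C \<in> C" using rC(3)[OF nC(3)] by simp
    then have eq: "N #> (n \<otimes> r C) = C"
      using repr_independence[OF _ rC(2)[OF nC(3)] subN] rC(3)[OF nC(3)] by metis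
    show ?thesis using nC eq nG rC(2)[OF nC(3)] by (simp add: f_def h_def m_assoc)
  qed
  have fh: "f (h g) = g" if g: "g \<in> carrier G" for g
    using g rC(2)[OF NgC[OF g]] by (simp add: f_def h_def m_assoc)
  have "homeomorphic_maps (prod_topology TE TF) T f h"
    unfolding homeomorphic_maps_def
  proof (intro conjI ballI)
    show "continuous_map (prod_topology TE TF) T f" by (rule contf)
    show "continuous_map T (prod_topology TE TF) h" by (rule conth)
    fix x assume "x \<in> topspace (prod_topology TE TF)"
    then show "h (f x) = x" using hf tsP by simp
  next
    fix y assume "y \<in> topspace T"
    then show "f (h y) = y" using fh ts by simp
  qed
  then have hs: "prod_topology TE TF homeomorphic_space T"
    unfolding homeomorphic_space_def by (intro exI)
  show ?thesis
    apply (rule exI[of _ E], rule exI[of _ TE], rule exI[of _ F], rule exI[of _ TF])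
    using tgE indE tgF dF hs by simp
qed

theorem mainTheorem10:
  fixes G :: "('a, 'b) monoid_scheme" and T :: "'a topology"
  assumes "topological_group G T"
  shows
   "(alexandroff_space T \<longleftrightarrow> openin T (nbhd_kernel T \<one>\<^bsub>G\<^esub>))
    \<and> (alexandroff_space T \<longleftrightarrow>
        (\<exists>(E :: 'a monoid) TE (F :: 'a set monoid) TF.
           topological_group E TE \<and> indiscrete_space TE \<and>
           topological_group F TF \<and> discrete_space TF \<and>
           prod_topology TE TF homeomorphic_space T))
    \<and> (alexandroff_space T \<longleftrightarrow>
        (\<exists>(TE :: 'a topology) (TF :: 'a set topology).
           indiscrete_space TE \<and> discrete_space TF \<and>
           prod_topology TE TF homeomorphic_space T))
    \<and> ((\<exists>(E :: ('e, 'c) monoid_scheme) TE (F :: ('f, 'd) monoid_scheme) TF.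
           topological_group E TE \<and> indiscrete_space TE \<and>
           topological_group F TF \<and> discrete_space TF \<and>
           prod_topology TE TF homeomorphic_space T) \<longrightarrow> alexandroff_space T)
    \<and> ((\<exists>(TE :: 'e topology) (TF :: 'f topology).
           indiscrete_space TE \<and> discrete_space TF \<and>
           prod_topology TE TF homeomorphic_space T) \<longrightarrow> alexandroff_space T)"
  proof -
  have ts: "topspace T = carrier G" and grp: "group G"
    using assms unfolding topological_group_def by simp_all
  have one: "\<one>\<^bsub>G\<^esub> \<in> topspace T" using ts group.is_monoid[OF grp] monoid.one_closed by blast
  have AN: "alexandroff_space T \<Longrightarrow> openin T (nbhd_kernel T \<one>\<^bsub>G\<^esub>)"
    using one unfolding alexandroff_space_def by blast
  have B3: "\<exists>(E :: 'a monoid) TE (F :: 'a set monoid) TF.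
           topological_group E TE \<and> indiscrete_space TE \<and>
           topological_group F TF \<and> discrete_space TF \<and>
           prod_topology TE TF homeomorphic_space T" if "openin T (nbhd_kernel T \<one>\<^bsub>G\<^esub>)"
    using lemB[OF assms that] .
  have B4: "\<exists>(TE :: 'a topology) (TF :: 'a set topology).
           indiscrete_space TE \<and> discrete_space TF \<and>
           prod_topology TE TF homeomorphic_space T" if hyp: "openin T (nbhd_kernel T \<one>\<^bsub>G\<^esub>)"
  proof -
    obtain E :: "'a monoid" and TE and F :: "'a set monoid" and TF where
      "topological_group E TE" "indiscrete_space TE" "topological_group F TF" "discrete_space TF"
      "prod_topology TE TF homeomorphic_space T"
      using B3[OF hyp] by (elim exE conjE)
    then show ?thesis by (intro exI conjI)
  qed
  have A3: "alexandroff_space T" if hyp: "\<exists>(E :: ('x, 'y) monoid_scheme) TE (F :: ('z, 'w) monoid_scheme) TF.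
           topological_group E TE \<and> indiscrete_space TE \<and>
           topological_group F TF \<and> discrete_space TF \<and>
           prod_topology TE TF homeomorphic_space T"
  proof -
    obtain E :: "('x, 'y) monoid_scheme" and TE and F :: "('z, 'w) monoid_scheme" and TF where
      "topological_group E TE" "indiscrete_space TE" "topological_group F TF" "discrete_space TF"
      "prod_topology TE TF homeomorphic_space T"
      using hyp by (elim exE conjE)
    then show ?thesis by (intro lemA[of TE TF])
  qed
  have A4: "alexandroff_space T" if hyp: "\<exists>(TE :: 'x topology) (TF :: 'z topology).
           indiscrete_space TE \<and> discrete_space TF \<and>
           prod_topology TE TF homeomorphic_space T"
  proof -
    obtain TE :: "'x topology" and TF :: "'z topology" where
      "indiscrete_space TE" "discrete_space TF" "prod_topology TE TF homeomorphic_space T"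
      using hyp by (elim exE conjE)
    then show ?thesis by (rule lemA)
  qed
  have L: "alexandroff_space T \<longleftrightarrow> openin T (nbhd_kernel T \<one>\<^bsub>G\<^esub>)"
    using AN B4 A4 by blast
  show ?thesis
  proof (intro conjI impI)
    show "alexandroff_space T \<longleftrightarrow> openin T (nbhd_kernel T \<one>\<^bsub>G\<^esub>)" by (rule L)
    show "alexandroff_space T \<longleftrightarrow>
        (\<exists>(E :: 'a monoid) TE (F :: 'a set monoid) TF.
           topological_group E TE \<and> indiscrete_space TE \<and>
           topological_group F TF \<and> discrete_space TF \<and>
           prod_topology TE TF homeomorphic_space T)"
      using L B3 A3 by blast
    show "alexandroff_space T \<longleftrightarrow>
        (\<exists>(TE :: 'a topology) (TF :: 'a set topology).
           indiscrete_space TE \<and> discrete_space TF \<and>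
           prod_topology TE TF homeomorphic_space T)"
      using L B4 A4 by blast
  next
    assume "\<exists>(E :: ('e, 'c) monoid_scheme) TE (F :: ('f, 'd) monoid_scheme) TF.
           topological_group E TE \<and> indiscrete_space TE \<and>
           topological_group F TF \<and> discrete_space TF \<and>
           prod_topology TE TF homeomorphic_space T"
    then show "alexandroff_space T" by (rule A3)
  next
    assume "\<exists>(TE :: 'e topology) (TF :: 'f topology).
           indiscrete_space TE \<and> discrete_space TF \<and>
           prod_topology TE TF homeomorphic_space T"
    then show "alexandroff_space T" by (rule A4)
  qed
qed

end
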